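(* Let $\sigma=\{\lambda_1,\ldots,\lambda_n\}$ be a set of $n$ distinct real numbers and let $\mathcal{F}$ be a finite set of real numbers. Then for any connected graph $G$ on $n\geq 2$ vertices there exists a matrix $A\in\mathcal{S}(G)$ with the strong spectral property such that $\operatorname{spec}(A)=\sigma$ and none of the diagonal entries of $A$ lies in $\mathcal{F}$.
   Context: For a simple graph $G$ on vertex set $\{1,\ldots,n\}$, $\mathcal{S}(G)$ is the set of all $n\times n$ real symmetric matrices $A=(a_{ij})$ such that for $i\neq j$, $a_{ij}\neq 0$ if and only if $\{i,j\}$ is an edge of $G$ (diagonal entries are unrestricted). A real symmetric matrix $A$ has the strong spectral property (SSP) if the only real symmetric matrix $X$ satisfying $A\circ X=O$, $I\circ X=O$ and $AX-XA=O$ is $X=O$, where $\circ$ is the entrywise product. $\operatorname{spec}(A)$ denotes the multiset of eigenvalues of $A$. *)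

theory Defs
  imports "HOL-Analysis.Analysis" "HOL-Library.Multiset"
begin

definition simple_graph :: "('n \<Rightarrow> 'n \<Rightarrow> bool) \<Rightarrow> bool" where
  "simple_graph E \<longleftrightarrow> (\<forall>i j. E i j \<longrightarrow> E j i) \<and> (\<forall>i. \<not> E i i)"

definition connected_graph :: "('n \<Rightarrow> 'n \<Rightarrow> bool) \<Rightarrow> bool" where
  "connected_graph E \<longleftrightarrow> (\<forall>u v. E\<^sup>*\<^sup>* u v)"

definition hadamard :: "real^'n^'n \<Rightarrow> real^'n^'n \<Rightarrow> real^'n^'n" where
  "hadamard A X = (\<chi> i j. A$i$j * X$i$j)"

definition symmetric_mat :: "real^'n^'n \<Rightarrow> bool" where
  "symmetric_mat A \<longleftrightarrow> transpose A = A"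

definition S_graph :: "('n \<Rightarrow> 'n \<Rightarrow> bool) \<Rightarrow> (real^'n^'n) set" where
  "S_graph E = {A. symmetric_mat A \<and> (\<forall>i j. i \<noteq> j \<longrightarrow> (A$i$j \<noteq> 0 \<longleftrightarrow> E i j))}"

definition SSP :: "real^'n^'n \<Rightarrow> bool" where
  "SSP A \<longleftrightarrow> (\<forall>X. symmetric_mat X \<and> hadamard A X = 0 \<and> hadamard (mat 1) X = 0
                  \<and> A ** X - X ** A = 0 \<longrightarrow> X = 0)"

definition spec_is :: "real^'n^'n \<Rightarrow> real multiset \<Rightarrow> bool" where
  "spec_is A M \<longleftrightarrow> (\<forall>x. det (x *\<^sub>R mat 1 - A) = (\<Prod>\<mu>\<in>#M. x - \<mu>))"

end

theory Submission
  imports Defs "HOL-Computational_Algebra.Polynomial"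
begin

definition cpoly :: "real^'n^'n \<Rightarrow> real poly" where
  "cpoly B = (\<Sum>p | p permutes (UNIV::'n set). of_int (sign p) *
      (\<Prod>i\<in>UNIV. [:- B$i$(p i), if i = p i then 1 else 0:]))"

lemma poly_cpoly: "poly (cpoly B) x = det (x *\<^sub>R mat 1 - B)"
  unfolding cpoly_def det_def
  by (simp add: poly_sum poly_prod mat_def)

lemma degree_term_le:
  fixes B :: "real^'n::finite^'n"
  shows "degree (\<Prod>i\<in>(UNIV::'n::finite set). [:- B$i$(p i), if i = p i then 1 else 0:]) \<le> CARD('n)"
proof -
  have "degree (\<Prod>i\<in>(UNIV::'n::finite set). [:- B$i$(p i), if i = p i then 1 else (0::real):])
     \<le> (\<Sum>i\<in>UNIV. degree [:- B$i$(p i), if i = p i then 1 else (0::real):])"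
    by (rule order.trans[OF degree_prod_sum_le]) auto
  also have "\<dots> \<le> (\<Sum>i\<in>(UNIV::'n set). 1)"
    by (intro sum_mono) auto
  finally show ?thesis by simp
qed

lemma degree_term_lt:
  fixes B :: "real^'n::finite^'n"
  assumes "p i \<noteq> i"
  shows "degree (\<Prod>i\<in>(UNIV::'n::finite set). [:- B$i$(p i), if i = p i then 1 else (0::real):]) < CARD('n)"
proof -
  have "degree (\<Prod>i\<in>(UNIV::'n::finite set). [:- B$i$(p i), if i = p i then 1 else (0::real):])
     \<le> (\<Sum>i\<in>UNIV. degree [:- B$i$(p i), if i = p i then 1 else (0::real):])"
    by (rule order.trans[OF degree_prod_sum_le]) auto
  also have "\<dots> < (\<Sum>i\<in>(UNIV::'n set). 1)"
    by (rule sum_strict_mono_ex1) (use assms in \<open>auto intro!: exI[of _ i]\<close>)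
  finally show ?thesis by simp
qed

lemma degree_cpoly: "degree (cpoly (B::real^'n^'n)) \<le> CARD('n)"
  unfolding cpoly_def
proof (intro degree_sum_le)
  fix p
  have "degree (of_int (sign p) * (\<Prod>i\<in>(UNIV::'n set). [:- B$i$(p i), if i = p i then 1 else (0::real):]))
     \<le> degree (of_int (sign p) :: real poly) + degree (\<Prod>i\<in>(UNIV::'n set). [:- B$i$(p i), if i = p i then 1 else (0::real):])"
    by (rule degree_mult_le)
  also have "\<dots> \<le> CARD('n)" using degree_term_le[of B p] by simp
  finally show "degree (of_int (sign p) * (\<Prod>i\<in>(UNIV::'n set). [:- B$i$(p i), if i = p i then 1 else (0::real):])) \<le> CARD('n)" .
qed simp

lemma coeff_cpoly: "coeff (cpoly (B::real^'n^'n)) CARD('n) = 1"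
proof -
  have "coeff (cpoly B) CARD('n) = (\<Sum>p | p permutes (UNIV::'n set). of_int (sign p) *
      coeff (\<Prod>i\<in>UNIV. [:- B$i$(p i), if i = p i then 1 else 0:]) CARD('n))"
    unfolding cpoly_def coeff_sum by (simp add: of_int_poly)
  also have "\<dots> = (\<Sum>p \<in> {id}. of_int (sign p) *
      coeff (\<Prod>i\<in>UNIV. [:- B$i$(p i), if i = p i then 1 else 0:]) CARD('n))"
  proof (rule sum.mono_neutral_right)
    show "{id} \<subseteq> {p. p permutes (UNIV::'n set)}" by (auto simp: permutes_id)
    show "\<forall>p\<in>{p. p permutes (UNIV::'n set)} - {id}. of_int (sign p) *
      coeff (\<Prod>i\<in>UNIV. [:- B$i$(p i), if i = p i then 1 else 0:]) CARD('n) = 0"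
    proof
      fix p assume "p \<in> {p. p permutes (UNIV::'n set)} - {id}"
      then obtain i where "p i \<noteq> i" by (auto simp: fun_eq_iff)
      from degree_term_lt[where p=p and i=i and B=B, OF this] show "of_int (sign p) *
      coeff (\<Prod>i\<in>UNIV. [:- B$i$(p i), if i = p i then 1 else 0:]) CARD('n) = (0::real)"
        by (simp add: coeff_eq_0)
    qed
  qed (simp add: finite_permutations)
  also have "\<dots> = coeff (\<Prod>i\<in>(UNIV::'n set). [:- B$i$i, 1:]) CARD('n)"
    by (simp add: sign_id)
  also have "\<dots> = 1"
  proof -
    have "lead_coeff (\<Prod>i\<in>(UNIV::'n set). [:- B$i$i, 1:]) = 1"
      by (simp add: lead_coeff_prod)
    moreover have "degree (\<Prod>i\<in>(UNIV::'n set). [:- B$i$i, 1:]) = CARD('n)"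
      by (subst degree_prod_eq_sum_degree) auto
    ultimately show ?thesis by simp
  qed
  finally show ?thesis .
qed

lemma charpoly_from_roots:
  fixes B :: "real^'n^'n" and lam :: "'n \<Rightarrow> real"
  assumes inj: "inj lam" and roots: "\<And>k. det (lam k *\<^sub>R mat 1 - B) = 0"
  shows "det (x *\<^sub>R mat 1 - B) = (\<Prod>k\<in>UNIV. x - lam k)"
proof -
  define Q where "Q = (\<Prod>k\<in>(UNIV::'n set). [:- lam k, 1:])"
  have polyQ: "poly Q y = (\<Prod>k\<in>UNIV. y - lam k)" for y
    by (simp add: Q_def poly_prod)
  have dQ: "degree Q = CARD('n)"
    unfolding Q_def by (subst degree_prod_eq_sum_degree) auto
  have cQ: "coeff Q CARD('n) = 1"
    proof -
    have "lead_coeff Q = 1" by (simp add: Q_def lead_coeff_prod)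
    thus ?thesis using dQ by simp
  qed
  have "cpoly B - Q = 0"
  proof (rule ccontr)
    assume ne: "cpoly B - Q \<noteq> 0"
    have "degree (cpoly B - Q) \<le> CARD('n)"
      using degree_diff_le degree_cpoly dQ by (metis order.refl)
    moreover have "coeff (cpoly B - Q) CARD('n) = 0"
      using coeff_cpoly cQ by simp
    ultimately have dlt: "degree (cpoly B - Q) < CARD('n)"
      using ne by (metis leading_coeff_0_iff le_neq_implies_less)
    have sub: "range lam \<subseteq> {y. poly (cpoly B - Q) y = 0}"
      using roots by (auto simp: poly_cpoly polyQ)
    have "CARD('n) = card (range lam)"
      using inj by (simp add: card_image)
    also have "\<dots> \<le> card {y. poly (cpoly B - Q) y = 0}"
      by (rule card_mono[OF poly_roots_finite[OF ne] sub])
    also have "\<dots> \<le> degree (cpoly B - Q)"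
      by (rule card_poly_roots_bound[OF ne])
    finally show False using dlt by simp
  qed
  hence "poly (cpoly B) x = poly Q x" by simp
  thus ?thesis by (simp add: poly_cpoly polyQ)
qed

lemma ex_max_fun:
  fixes f :: "'a::finite \<Rightarrow> real"
  obtains p where "\<And>q. f q \<le> f p"
proof -
  have "Max (range f) \<in> range f" by (intro Max_in) auto
  then obtain p where "f p = Max (range f)" by (metis imageE)
  moreover have "\<And>q. f q \<le> Max (range f)" by (intro Max_ge) auto
  ultimately show ?thesis using that by metis
qed

lemma ssp_near_diag:
  fixes d :: "'n::finite \<Rightarrow> real" and W :: "'n \<Rightarrow> 'n \<Rightarrow> real"
  assumes gap: "\<And>i j. i \<noteq> j \<Longrightarrow> h \<le> \<bar>d i - d j\<bar>"
    and Wb: "\<And>i j. \<bar>W i j\<bar> \<le> K" and Wd: "\<And>i. W i i = 0"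
    and small: "2 * real CARD('n) * e * K < h" and e0: "e \<ge> 0"
  shows "SSP (\<chi> i j. if i = j then d i else e * W i j)"
  unfolding SSP_def
proof (intro allI impI)
  fix X :: "real^'n^'n"
  define B where "B = (\<chi> i j. if i = j then d i else e * W i j)"
  assume "symmetric_mat X \<and> hadamard (\<chi> i j. if i = j then d i else e * W i j) X = 0 \<and>
        hadamard (mat 1) X = 0 \<and> (\<chi> i j. if i = j then d i else e * W i j) ** X - X ** (\<chi> i j. if i = j then d i else e * W i j) = 0"
  hence hd: "hadamard (mat 1) X = 0" and comm: "B ** X - X ** B = 0" by (auto simp: B_def)
  have diag0: "X$i$i = 0" for i
    using arg_cong[OF hd, of "\<lambda>M. M$i$i"] by (simp add: hadamard_def mat_def)
  have Bij: "B$i$l = (if i = l then d i else 0) + e * W i l" for i l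
    by (simp add: B_def Wd)
  have rowB: "(\<Sum>l\<in>UNIV. B$i$l * X$l$j) = d i * X$i$j + e * (\<Sum>l\<in>UNIV. W i l * X$l$j)" for i j
  proof -
    have "(\<Sum>l\<in>UNIV. B$i$l * X$l$j) = (\<Sum>l\<in>UNIV. (if i = l then d i * X$l$j else 0) + e * (W i l * X$l$j))"
      by (intro sum.cong) (auto simp: Bij algebra_simps)
    also have "\<dots> = d i * X$i$j + e * (\<Sum>l\<in>UNIV. W i l * X$l$j)"
      by (simp add: sum.distrib sum_distrib_left)
    finally show ?thesis .
  qed
  have colB: "(\<Sum>l\<in>UNIV. X$i$l * B$l$j) = X$i$j * d j + e * (\<Sum>l\<in>UNIV. X$i$l * W l j)" for i j
  proof -
    have "(\<Sum>l\<in>UNIV. X$i$l * B$l$j) = (\<Sum>l\<in>UNIV. (if l = j then X$i$l * d j else 0) + e * (X$i$l * W l j))"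
      by (intro sum.cong) (auto simp: Bij algebra_simps)
    also have "\<dots> = X$i$j * d j + e * (\<Sum>l\<in>UNIV. X$i$l * W l j)"
      by (simp add: sum.distrib sum_distrib_left)
    finally show ?thesis .
  qed
  obtain p where pmax: "\<And>q. \<bar>X$fst q$snd q\<bar> \<le> \<bar>X$fst p$snd p\<bar>"
    using ex_max_fun[of "\<lambda>q. \<bar>X$fst q$snd q\<bar>"] by blast
  define i where "i = fst p"
  define j where "j = snd p"
  define m where "m = \<bar>X$i$j\<bar>"
  have mmax: "\<bar>X$a$b\<bar> \<le> m" for a b using pmax[of "(a,b)"] by (simp add: m_def i_def j_def)
  have "m = 0"
  proof (cases "i = j")
    case True thus ?thesis by (simp add: m_def diag0)
  next
    case False
    have eq: "(d i - d j) * X$i$j = e * ((\<Sum>l\<in>UNIV. X$i$l * W l j) - (\<Sum>l\<in>UNIV. W i l * X$l$j))"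
      using arg_cong[OF comm, of "\<lambda>M. M$i$j"] rowB[of i j] colB[of i j]
      by (simp add: matrix_matrix_mult_def algebra_simps)
    have b1: "\<bar>\<Sum>l\<in>UNIV. X$i$l * W l j\<bar> \<le> real CARD('n) * (m * K)"
    proof -
      have "\<bar>\<Sum>l\<in>UNIV. X$i$l * W l j\<bar> \<le> (\<Sum>l\<in>(UNIV::'n set). m * K)"
      proof (rule order.trans[OF sum_abs], intro sum_mono)
        fix l
        have "0 \<le> m" using mmax[of i l] by linarith
        thus "\<bar>X$i$l * W l j\<bar> \<le> m * K" unfolding abs_mult
          by (intro mult_mono mmax Wb) auto
      qed
      thus ?thesis by simp
    qed
    have b2: "\<bar>\<Sum>l\<in>UNIV. W i l * X$l$j\<bar> \<le> real CARD('n) * (m * K)"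
    proof -
      have "\<bar>\<Sum>l\<in>UNIV. W i l * X$l$j\<bar> \<le> (\<Sum>l\<in>(UNIV::'n set). m * K)"
      proof (rule order.trans[OF sum_abs], intro sum_mono)
        fix l
        have "0 \<le> m" using mmax[of i l] by linarith
        hence "\<bar>X$l$j\<bar> * \<bar>W i l\<bar> \<le> m * K"
          by (intro mult_mono mmax Wb) auto
        thus "\<bar>W i l * X$l$j\<bar> \<le> m * K" by (simp add: abs_mult mult.commute)
      qed
      thus ?thesis by simp
    qed
    have "h * m \<le> \<bar>d i - d j\<bar> * m"
      using gap[OF False] by (intro mult_right_mono) (auto simp: m_def)
    also have "\<dots> = e * \<bar>(\<Sum>l\<in>UNIV. X$i$l * W l j) - (\<Sum>l\<in>UNIV. W i l * X$l$j)\<bar>"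
      using arg_cong[OF eq, of abs] e0 by (simp add: abs_mult m_def)
    also have "\<dots> \<le> e * (2 * real CARD('n) * (m * K))"
      using b1 b2 e0 by (intro mult_left_mono) auto
    finally have "h * m \<le> (2 * real CARD('n) * e * K) * m" by (simp add: algebra_simps)
    hence "(h - 2 * real CARD('n) * e * K) * m \<le> 0" by (simp add: algebra_simps)
    moreover have "m \<ge> 0" by (simp add: m_def)
    ultimately show "m = 0" using small
      by (smt (verit) mult_pos_pos)
  qed
  hence "\<And>a b. X$a$b = 0" using mmax by (smt (verit))
  thus "X = 0" by (simp add: vec_eq_iff)
qed

lemma row_bound:
  fixes W :: "'n::finite \<Rightarrow> 'n \<Rightarrow> real"
  assumes Wb: "\<And>j l. \<bar>W j l\<bar> \<le> K"
  shows "\<bar>\<Sum>l\<in>A. W j l * v l\<bar> \<le> K * (\<Sum>l\<in>A. \<bar>v l\<bar>)"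
proof -
  have "\<bar>\<Sum>l\<in>A. W j l * v l\<bar> \<le> (\<Sum>l\<in>A. \<bar>W j l * v l\<bar>)" by (rule sum_abs)
  also have "\<dots> \<le> (\<Sum>l\<in>A. K * \<bar>v l\<bar>)"
    by (intro sum_mono) (simp add: abs_mult mult_right_mono Wb)
  finally show ?thesis by (simp add: sum_distrib_left)
qed

lemma eig_nonzero:
  fixes d :: "'n::finite \<Rightarrow> real" and W :: "'n \<Rightarrow> 'n \<Rightarrow> real" and v :: "'n \<Rightarrow> real"
  assumes ev: "\<And>j. d j * v j + e * (\<Sum>l\<in>UNIV. W j l * v l) = lam * v j"
    and gap: "\<And>j. j \<noteq> i \<Longrightarrow> h \<le> \<bar>d j - lam\<bar>" and h0: "h > 0"
    and Wb: "\<And>j l. \<bar>W j l\<bar> \<le> K" and e0: "e \<ge> 0"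
    and small: "real CARD('n) * e * K \<le> h / 2"
    and vi: "v i = 0"
  shows "v j = 0"
proof -
  define S where "S = (\<Sum>l\<in>UNIV. \<bar>v l\<bar>)"
  have K0: "K \<ge> 0" using Wb[of i i] by linarith
  have S0: "S \<ge> 0" by (simp add: S_def sum_nonneg)
  have bj: "h * \<bar>v j\<bar> \<le> e * (K * S)" for j
  proof (cases "j = i")
    case True thus ?thesis using vi e0 K0 S0 by simp
  next
    case False
    have "h * \<bar>v j\<bar> \<le> \<bar>d j - lam\<bar> * \<bar>v j\<bar>"
      using gap[OF False] by (intro mult_right_mono) auto
    also have "\<dots> = \<bar>e * (\<Sum>l\<in>UNIV. W j l * v l)\<bar>"
      using ev[of j] by (simp add: abs_mult[symmetric] algebra_simps)
    also have "\<dots> \<le> e * (K * S)"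
      using row_bound[where W=W and K=K and A=UNIV and j=j and v=v, OF Wb] e0 by (simp add: abs_mult S_def mult_left_mono)
    finally show ?thesis .
  qed
  have "h * S = (\<Sum>j\<in>UNIV. h * \<bar>v j\<bar>)" by (simp add: S_def sum_distrib_left)
  also have "\<dots> \<le> (\<Sum>j\<in>(UNIV::'n set). e * (K * S))" by (intro sum_mono bj)
  also have "\<dots> = (real CARD('n) * e * K) * S" by simp
  also have "\<dots> \<le> (h/2) * S" using small S0 by (intro mult_right_mono) auto
  finally have "h * S \<le> (h/2) * S" .
  moreover have "(h/2) * S = h * S / 2" by simp
  ultimately have "h * S \<le> 0" by linarith
  hence "S \<le> 0" using h0 by (simp add: mult_le_0_iff)
  hence "S = 0" using S0 by simp
  hence "\<forall>l\<in>UNIV. \<bar>v l\<bar> = 0" unfolding S_def by (subst sum_nonneg_eq_0_iff[symmetric]) auto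
  thus ?thesis by simp
qed

lemma eig_est:
  fixes d :: "'n::finite \<Rightarrow> real" and W :: "'n \<Rightarrow> 'n \<Rightarrow> real" and u :: "'n \<Rightarrow> real"
  assumes ev: "\<And>j. d j * u j + e * (\<Sum>l\<in>UNIV. W j l * u l) = lam * u j"
    and gap: "\<And>j. j \<noteq> i \<Longrightarrow> h \<le> \<bar>d j - lam\<bar>" and h0: "h > 0"
    and Wb: "\<And>j l. \<bar>W j l\<bar> \<le> K" and Wd: "\<And>j. W j j = 0" and e0: "e \<ge> 0"
    and small: "real CARD('n) * e * K \<le> h / 2"
    and ui: "u i = 1"
  shows "\<bar>d i - lam - e^2 * (\<Sum>j\<in>UNIV. W i j * W j i / (d j - lam))\<bar>
           \<le> 2 * real CARD('n)^2 * e^3 * K^3 / h^2"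
proof -
  define n where "n = real CARD('n)"
  define R where "R = UNIV - {i}"
  define S where "S = (\<Sum>l\<in>R. \<bar>u l\<bar>)"
  have K0: "K \<ge> 0" using Wb[of i i] by linarith
  have S0: "S \<ge> 0" by (simp add: S_def sum_nonneg)
  have n0: "n \<ge> 0" by (simp add: n_def)
  have sumU: "(\<Sum>l\<in>UNIV. f l) = f i + (\<Sum>l\<in>R. f l)" for f :: "'n \<Rightarrow> real"
    unfolding R_def by (simp add: sum.remove)
  have bj: "h * \<bar>u j\<bar> \<le> e * (K * (1 + S))" if "j \<in> R" for j
  proof -
    have ji: "j \<noteq> i" using that by (simp add: R_def)
    have "h * \<bar>u j\<bar> \<le> \<bar>d j - lam\<bar> * \<bar>u j\<bar>"
      using gap[OF ji] by (intro mult_right_mono) auto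
    also have "\<dots> = \<bar>e * (\<Sum>l\<in>UNIV. W j l * u l)\<bar>"
      using ev[of j] by (simp add: abs_mult[symmetric] algebra_simps)
    also have "\<dots> \<le> e * (K * (\<Sum>l\<in>UNIV. \<bar>u l\<bar>))"
      using row_bound[where W=W and K=K and A=UNIV and j=j and v=u, OF Wb] e0 by (simp add: abs_mult mult_left_mono)
    also have "(\<Sum>l\<in>UNIV. \<bar>u l\<bar>) = 1 + S" using sumU[of "\<lambda>l. \<bar>u l\<bar>"] by (simp add: ui S_def)
    finally show ?thesis .
  qed
  have cardR: "real (card R) \<le> n" unfolding n_def R_def
    by (simp add: card_mono)
  have hS: "h * S \<le> n * e * K * (1 + S)"
  proof -
    have "h * S = (\<Sum>j\<in>R. h * \<bar>u j\<bar>)" by (simp add: S_def sum_distrib_left)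
    also have "\<dots> \<le> (\<Sum>j\<in>R. e * (K * (1 + S)))" by (intro sum_mono bj)
    also have "\<dots> = real (card R) * (e * (K * (1 + S)))" by simp
    also have "\<dots> \<le> n * (e * (K * (1 + S)))"
      using cardR e0 K0 S0 by (intro mult_right_mono) auto
    finally show ?thesis by (simp add: algebra_simps)
  qed
  have "n * e * K * (1 + S) \<le> (h / 2) * (1 + S)"
    using small S0 by (intro mult_right_mono) (auto simp: n_def)
  hence "h * S \<le> (h / 2) * (1 + S)" using hS by linarith
  hence "h * S \<le> h / 2 + (h * S) / 2" by (simp add: algebra_simps)
  hence "h * S \<le> h * 1" by linarith
  hence S1: "S \<le> 1" using h0 by (simp only: mult_le_cancel_left_pos)
  have "h * S \<le> n * e * K * 2"
  proof -
    have "n * e * K * (1 + S) \<le> n * e * K * 2"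
      using S1 e0 K0 n0 by (intro mult_left_mono) auto
    thus ?thesis using hS by linarith
  qed
  hence Sb: "S \<le> 2 * n * e * K / h" using h0 by (simp add: pos_le_divide_eq mult.commute)
  define r where "r j = (\<Sum>l\<in>R. W j l * u l)" for j
  have rb: "\<bar>r j\<bar> \<le> K * S" for j unfolding r_def S_def by (rule row_bound[OF Wb])
  have rowsum: "(\<Sum>l\<in>UNIV. W j l * u l) = W j i + r j" for j
    using sumU[of "\<lambda>l. W j l * u l"] by (simp add: ui r_def)
  have uj: "u j = - e * (W j i + r j) / (d j - lam)" if "j \<noteq> i" for j
  proof -
    have nz: "d j - lam \<noteq> 0" using gap[OF that] h0 by auto
    have eq: "(d j - lam) * u j = - e * (W j i + r j)"
      using ev[of j] rowsum[of j] by (simp add: algebra_simps)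
    from nz have "u j = ((d j - lam) * u j) / (d j - lam)" by simp
    also have "\<dots> = - e * (W j i + r j) / (d j - lam)" by (simp only: eq)
    finally show ?thesis .
  qed
  have rowi: "d i - lam = - e * (\<Sum>j\<in>UNIV. W i j * u j)"
    using ev[of i] by (simp add: ui algebra_simps)
  also have "\<dots> = (\<Sum>j\<in>UNIV. - e * (W i j * u j))"
    by (simp add: sum_distrib_left)
  also have "\<dots> = (\<Sum>j\<in>UNIV. e^2 * (W i j * (W j i + r j) / (d j - lam)))"
  proof (intro sum.cong refl)
    fix j show "- e * (W i j * u j) = e^2 * (W i j * (W j i + r j) / (d j - lam))"
    proof (cases "j = i")
      case True thus ?thesis by (simp add: Wd)
    next
      case False thus ?thesis by (simp add: uj[OF False] power2_eq_square)
    qed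
  qed
  finally have "d i - lam - e^2 * (\<Sum>j\<in>UNIV. W i j * W j i / (d j - lam))
      = e^2 * (\<Sum>j\<in>UNIV. W i j * r j / (d j - lam))"
    by (simp add: sum_distrib_left distrib_left add_divide_distrib sum.distrib)
  moreover have "\<bar>\<Sum>j\<in>UNIV. W i j * r j / (d j - lam)\<bar> \<le> n * (K * (K * S) / h)"
  proof -
    have "\<bar>\<Sum>j\<in>UNIV. W i j * r j / (d j - lam)\<bar> \<le> (\<Sum>j\<in>UNIV. \<bar>W i j * r j / (d j - lam)\<bar>)"
      by (rule sum_abs)
    also have "\<dots> \<le> (\<Sum>j\<in>(UNIV::'n set). K * (K * S) / h)"
    proof (intro sum_mono)
      fix j
      show "\<bar>W i j * r j / (d j - lam)\<bar> \<le> K * (K * S) / h"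
      proof (cases "j = i")
        case True thus ?thesis using K0 S0 h0 by (simp add: Wd)
      next
        case False
        have "\<bar>W i j * r j / (d j - lam)\<bar> = \<bar>W i j\<bar> * \<bar>r j\<bar> / \<bar>d j - lam\<bar>"
          by (simp add: abs_mult)
        also have "\<dots> \<le> K * (K * S) / \<bar>d j - lam\<bar>"
          using Wb rb K0 by (intro divide_right_mono mult_mono) auto
        also have "\<dots> \<le> K * (K * S) / h"
          using gap[OF False] h0 K0 S0 by (intro divide_left_mono) auto
        finally show ?thesis .
      qed
    qed
    finally show ?thesis by (simp add: n_def)
  qed
  ultimately have "\<bar>d i - lam - e^2 * (\<Sum>j\<in>UNIV. W i j * W j i / (d j - lam))\<bar>
      \<le> e^2 * (n * (K * (K * S) / h))"
    by (simp only: abs_mult abs_power2) (rule mult_left_mono, auto)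
  also have "\<dots> \<le> e^2 * (n * (K * (K * (2 * n * e * K / h)) / h))"
    using Sb K0 n0 h0 e0
    by (intro mult_left_mono divide_right_mono mult_mono) (auto intro: mult_nonneg_nonneg)
  also have "\<dots> = 2 * n^2 * e^3 * K^3 / h^2"
    by (simp add: power2_eq_square power3_eq_cube)
  finally show ?thesis by (simp add: n_def)
qed

lemma signed_pow2_nonzero:
  fixes s :: "'a \<Rightarrow> real" and \<rho> :: "'a \<Rightarrow> nat"
  assumes fin: "finite S" and ne: "S \<noteq> {}" and inj: "inj_on \<rho> S"
    and s1: "\<And>j. j \<in> S \<Longrightarrow> \<bar>s j\<bar> = 1"
  shows "(\<Sum>j\<in>S. s j * 2^(\<rho> j)) \<noteq> 0"
proof -
  have "Max (\<rho> ` S) \<in> \<rho> ` S" using fin ne by (intro Max_in) auto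
  then obtain m where m: "m \<in> S" "\<rho> m = Max (\<rho> ` S)" by (metis imageE)
  have mmax: "\<rho> j \<le> \<rho> m" if "j \<in> S" for j using fin that m by simp
  define T where "T = S - {m}"
  have sub: "\<rho> ` T \<subseteq> {..<\<rho> m}"
  proof
    fix k assume "k \<in> \<rho> ` T"
    then obtain j where j: "j \<in> S" "j \<noteq> m" "k = \<rho> j" by (auto simp: T_def)
    have "\<rho> j \<noteq> \<rho> m" using inj j m by (metis inj_on_eq_iff)
    thus "k \<in> {..<\<rho> m}" using mmax[OF j(1)] j by auto
  qed
  have "\<bar>\<Sum>j\<in>T. s j * 2^(\<rho> j)\<bar> \<le> (\<Sum>j\<in>T. \<bar>s j * 2^(\<rho> j)\<bar>)" by (rule sum_abs)
  also have "\<dots> = (\<Sum>j\<in>T. (2::real)^(\<rho> j))"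
    by (intro sum.cong refl) (auto simp: abs_mult s1 T_def)
  also have "\<dots> = (\<Sum>k\<in>\<rho> ` T. (2::real)^k)"
    by (subst sum.reindex) (use inj in \<open>auto simp: T_def intro: inj_on_subset\<close>)
  also have "\<dots> \<le> (\<Sum>k\<in>{..<\<rho> m}. (2::real)^k)"
    by (intro sum_mono2 sub) auto
  also have "\<dots> = 2^(\<rho> m) - 1"
    by (simp add: sum_gp_strict)
  finally have small: "\<bar>\<Sum>j\<in>T. s j * 2^(\<rho> j)\<bar> \<le> 2^(\<rho> m) - 1" .
  have split: "(\<Sum>j\<in>S. s j * 2^(\<rho> j)) = s m * 2^(\<rho> m) + (\<Sum>j\<in>T. s j * 2^(\<rho> j))"
    unfolding T_def using fin m(1) by (simp add: sum.remove)
  have "\<bar>s m * 2^(\<rho> m)\<bar> = 2^(\<rho> m)" using s1[OF m(1)] by (simp add: abs_mult)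
  thus ?thesis unfolding split using small by linarith
qed

lemma finite_pos_lb:
  fixes A :: "real set"
  assumes "finite A" "\<And>x. x \<in> A \<Longrightarrow> 0 < x"
  obtains c where "c > 0" "\<And>x. x \<in> A \<Longrightarrow> c \<le> x"
proof -
  have "Min (insert 1 A) > 0" using assms by (subst Min_gr_iff) auto
  moreover have "\<And>x. x \<in> A \<Longrightarrow> Min (insert 1 A) \<le> x" using assms by auto
  ultimately show ?thesis using that by blast
qed

lemma finite_pos_lb':
  fixes A :: "real set"
  assumes "finite A" "\<And>x. x \<in> A \<Longrightarrow> 0 < x"
  shows "\<exists>c>0. \<forall>x\<in>A. c \<le> x"
  using finite_pos_lb[OF assms] by metis

lemma cont_det:
  fixes M :: "'a::topological_space \<Rightarrow> real^'n^'n"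
  assumes "\<And>i j. continuous_on S (\<lambda>x. M x $ i $ j)"
  shows "continuous_on S (\<lambda>x. det (M x))"
  unfolding det_def by (intro continuous_intros assms)

lemma c_approx:
  fixes d lam :: "'n::finite \<Rightarrow> real" and W :: "'n \<Rightarrow> 'n \<Rightarrow> real"
  assumes dl: "\<And>j. \<bar>d j - lam j\<bar> \<le> \<eta>" and eg: "\<eta> \<le> g / 2" and g0: "g > 0"
    and gap: "\<And>i j. i \<noteq> j \<Longrightarrow> g \<le> \<bar>lam i - lam j\<bar>"
    and Wb: "\<And>j l. \<bar>W j l\<bar> \<le> K" and Wd: "\<And>j. W j j = 0"
  shows "\<bar>(\<Sum>j\<in>UNIV. W i j * W j i / (d j - lam i)) - (\<Sum>j\<in>UNIV. W i j * W j i / (lam j - lam i))\<bar>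
     \<le> real CARD('n) * (K^2 * \<eta> / ((g/2) * g))"
proof -
  have K0: "K \<ge> 0" using Wb[of i i] by linarith
  have "\<bar>(\<Sum>j\<in>UNIV. W i j * W j i / (d j - lam i)) - (\<Sum>j\<in>UNIV. W i j * W j i / (lam j - lam i))\<bar>
      = \<bar>\<Sum>j\<in>UNIV. W i j * W j i / (d j - lam i) - W i j * W j i / (lam j - lam i)\<bar>"
    by (simp add: sum_subtractf)
  also have "\<dots> \<le> (\<Sum>j\<in>UNIV. \<bar>W i j * W j i / (d j - lam i) - W i j * W j i / (lam j - lam i)\<bar>)"
    by (rule sum_abs)
  also have "\<dots> \<le> (\<Sum>j\<in>(UNIV::'n set). K^2 * \<eta> / ((g/2) * g))"
  proof (intro sum_mono)
    fix j
    have e0: "\<eta> \<ge> 0" using dl[of j] by linarith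
    show "\<bar>W i j * W j i / (d j - lam i) - W i j * W j i / (lam j - lam i)\<bar> \<le> K^2 * \<eta> / ((g/2) * g)"
    proof (cases "j = i")
      case True thus ?thesis using e0 g0 by (simp add: Wd)
    next
      case False
      have g1: "g \<le> \<bar>lam j - lam i\<bar>" using gap[OF False] .
      have g2: "g/2 \<le> \<bar>d j - lam i\<bar>" using g1 dl[of j] eg by linarith
      have nz1: "lam j - lam i \<noteq> 0" and nz2: "d j - lam i \<noteq> 0" using g1 g2 g0 by auto
      have "W i j * W j i / (d j - lam i) - W i j * W j i / (lam j - lam i)
          = W i j * W j i * (lam j - d j) / ((d j - lam i) * (lam j - lam i))"
        using nz1 nz2 by (simp add: field_simps)
      hence "\<bar>W i j * W j i / (d j - lam i) - W i j * W j i / (lam j - lam i)\<bar>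
          = \<bar>W i j\<bar> * \<bar>W j i\<bar> * \<bar>lam j - d j\<bar> / (\<bar>d j - lam i\<bar> * \<bar>lam j - lam i\<bar>)"
        by (simp add: abs_mult)
      also have "\<dots> \<le> K * K * \<eta> / (\<bar>d j - lam i\<bar> * \<bar>lam j - lam i\<bar>)"
        using Wb K0 dl[of j] e0 by (intro divide_right_mono mult_mono) (auto simp: abs_minus_commute)
      also have "\<dots> \<le> K * K * \<eta> / ((g/2) * g)"
        using g1 g2 g0 K0 e0 by (intro divide_left_mono mult_mono) (auto intro!: mult_pos_pos)
      finally show ?thesis by (simp add: power2_eq_square)
    qed
  qed
  also have "\<dots> = real CARD('n) * (K^2 * \<eta> / ((g/2) * g))" by simp
  finally show ?thesis .
qed

theorem lemma2p3:
  fixes \<sigma> :: "real set" and F :: "real set" and E :: "'n::finite \<Rightarrow> 'n \<Rightarrow> bool"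
  assumes "CARD('n) \<ge> 2"
    and "finite \<sigma>" and "card \<sigma> = CARD('n)"
    and "finite F"
    and "simple_graph E" and "connected_graph E"
  shows "\<exists>A \<in> S_graph E. SSP A \<and> spec_is A (mset_set \<sigma>) \<and> (\<forall>i. A$i$i \<notin> F)"
proof -
  note n2 = assms(1)
  define n where "n = real CARD('n)"
  have n0: "n > 0" by (simp add: n_def)
  obtain lam where bij: "bij_betw lam (UNIV::'n set) \<sigma>"
    using finite_same_card_bij[of "UNIV::'n set" \<sigma>] assms(2,3) by auto
  have inj: "inj lam" using bij bij_betw_imp_inj_on by blast
  obtain \<rho> :: "'n \<Rightarrow> nat" where injr: "inj \<rho>"
    using ex_bij_betw_finite_nat[of "UNIV::'n set"] bij_betw_imp_inj_on by blast
  have symE: "E i j \<Longrightarrow> E j i" for i j using assms(5) by (auto simp: simple_graph_def)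
  have irr: "\<not> E i i" for i using assms(5) by (auto simp: simple_graph_def)
  have nbr: "\<exists>j. E i j" for i
  proof -
    obtain u where u: "u \<noteq> i"
    proof (rule ccontr)
      assume "\<not> thesis"
      hence "\<forall>u. u = i" using that by blast
      hence "(UNIV::'n set) = {i}" by auto
      hence "card (UNIV::'n set) = card {i}" by (rule arg_cong)
      hence "CARD('n) = 1" by simp
      thus False using n2 by simp
    qed
    have "E\<^sup>*\<^sup>* i u" using assms(6) by (simp add: connected_graph_def)
    thus ?thesis
    proof (cases rule: converse_rtranclpE)
      case base thus ?thesis using u by simp
    next
      case (step y) thus ?thesis by blast
    qed
  qed
  define W where "W i j = (if E i j then sqrt (\<bar>lam i - lam j\<bar> * 2^(\<rho> i + \<rho> j)) else 0)" for i j
  have Wsym: "W i j = W j i" for i j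
    unfolding W_def using symE by (auto simp: abs_minus_commute add.commute)
  have Wd: "W i i = 0" for i by (simp add: W_def irr)
  have Wnz: "W i j \<noteq> 0 \<longleftrightarrow> E i j" for i j
  proof
    assume "E i j"
    hence "i \<noteq> j" using irr by auto
    hence ne: "lam i \<noteq> lam j" using inj by (auto simp: inj_def)
    thus "W i j \<noteq> 0" using \<open>E i j\<close> ne by (simp add: W_def)
  qed (auto simp: W_def split: if_splits)
  define K where "K = 1 + (\<Sum>i\<in>UNIV. \<Sum>j\<in>UNIV. \<bar>W i j\<bar>)"
  have Wb: "\<bar>W i j\<bar> \<le> K" for i j
  proof -
    have "\<bar>W i j\<bar> \<le> (\<Sum>j\<in>UNIV. \<bar>W i j\<bar>)" by (rule member_le_sum) auto
    also have "\<dots> \<le> (\<Sum>i\<in>UNIV. \<Sum>j\<in>UNIV. \<bar>W i j\<bar>)" by (rule member_le_sum) (auto intro: sum_nonneg)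
    finally show ?thesis by (simp add: K_def)
  qed
  have "0 \<le> (\<Sum>i\<in>UNIV. \<Sum>j\<in>UNIV. \<bar>W i j\<bar>)" by (intro sum_nonneg) auto
  hence K0: "K > 0" unfolding K_def by linarith
  define c where "c i = (\<Sum>j\<in>UNIV. W i j * W j i / (lam j - lam i))" for i
  have cnz: "c i \<noteq> 0" for i
  proof -
    have tm: "W i j * W j i / (lam j - lam i) =
        (if E i j then 2^(\<rho> i) * (sgn (lam j - lam i) * 2^(\<rho> j)) else 0)" for j
    proof (cases "E i j")
      case True
      hence "i \<noteq> j" using irr by auto
      hence ne: "lam j - lam i \<noteq> 0" using inj by (auto simp: inj_def)
      have "W i j * W j i = W i j * W i j" by (simp add: Wsym)
      also have "\<dots> = \<bar>lam j - lam i\<bar> * 2^(\<rho> i + \<rho> j)"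
        using True by (simp add: W_def abs_minus_commute)
      finally have "W i j * W j i / (lam j - lam i) = \<bar>lam j - lam i\<bar> / (lam j - lam i) * 2^(\<rho> i + \<rho> j)"
        by simp
      also have "\<bar>lam j - lam i\<bar> / (lam j - lam i) = sgn (lam j - lam i)"
        using ne by (simp add: abs_sgn)
      finally show ?thesis using True by (simp add: power_add)
    qed (simp add: W_def)
    have "c i = (\<Sum>j\<in>UNIV. if E i j then 2^(\<rho> i) * (sgn (lam j - lam i) * 2^(\<rho> j)) else 0)"
      unfolding c_def by (intro sum.cong refl tm)
    also have "\<dots> = (\<Sum>j\<in>{j. E i j}. 2^(\<rho> i) * (sgn (lam j - lam i) * 2^(\<rho> j)))"
      by (simp add: sum.If_cases)
    also have "\<dots> = 2^(\<rho> i) * (\<Sum>j\<in>{j. E i j}. sgn (lam j - lam i) * 2^(\<rho> j))"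
      by (simp add: sum_distrib_left)
    finally have ceq: "c i = 2^(\<rho> i) * (\<Sum>j\<in>{j. E i j}. sgn (lam j - lam i) * 2^(\<rho> j))" .
    have "(\<Sum>j\<in>{j. E i j}. sgn (lam j - lam i) * 2^(\<rho> j)) \<noteq> 0"
    proof (rule signed_pow2_nonzero)
      show "{j. E i j} \<noteq> {}" using nbr[of i] by auto
      show "inj_on \<rho> {j. E i j}" using injr by (auto intro: inj_on_subset)
      fix j assume "j \<in> {j. E i j}"
      hence "i \<noteq> j" using irr by auto
      hence "lam j - lam i \<noteq> 0" using inj by (auto simp: inj_def)
      thus "\<bar>sgn (lam j - lam i)\<bar> = 1" by (simp add: abs_sgn_eq)
    qed auto
    thus ?thesis using ceq by simp
  qed
  obtain g where g0: "g > 0" and gap: "\<And>i j. i \<noteq> j \<Longrightarrow> g \<le> \<bar>lam i - lam j\<bar>"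
  proof -
    let ?A = "{x. \<exists>i j. i \<noteq> j \<and> x = \<bar>lam i - lam j\<bar>}"
    have "?A \<subseteq> range (\<lambda>p. \<bar>lam (fst p) - lam (snd p)\<bar>)"
    proof
      fix x assume "x \<in> ?A"
      then obtain i j where "x = \<bar>lam i - lam j\<bar>" by auto
      thus "x \<in> range (\<lambda>p. \<bar>lam (fst p) - lam (snd p)\<bar>)" by (intro range_eqI[where x="(i,j)"]) simp
    qed
    hence "finite ?A" by (rule finite_subset) auto
    moreover have "\<And>x. x \<in> ?A \<Longrightarrow> 0 < x"
    proof -
      fix x assume "x \<in> ?A"
      then obtain i j where "i \<noteq> j" "x = \<bar>lam i - lam j\<bar>" by blast
      moreover have "lam i \<noteq> lam j" using inj \<open>i \<noteq> j\<close> by (meson injD)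
      ultimately show "0 < x" by simp
    qed
    ultimately have "\<exists>c>0. \<forall>x\<in>?A. c \<le> x" by (rule finite_pos_lb')
    then obtain g where g: "g > 0" "\<And>x. x \<in> ?A \<Longrightarrow> g \<le> x" by blast
    show ?thesis
    proof (rule that[OF g(1)])
      fix i j :: 'n assume "i \<noteq> j"
      thus "g \<le> \<bar>lam i - lam j\<bar>" by (intro g(2)) blast
    qed
  qed
  obtain cm where cm0: "cm > 0" and cmb: "\<And>i. cm \<le> \<bar>c i\<bar>"
  proof -
    have "finite (range (\<lambda>i. \<bar>c i\<bar>))" by simp
    moreover have "\<And>x. x \<in> range (\<lambda>i. \<bar>c i\<bar>) \<Longrightarrow> 0 < x" using cnz by auto
    ultimately have "\<exists>b>0. \<forall>x\<in>range (\<lambda>i. \<bar>c i\<bar>). b \<le> x" by (rule finite_pos_lb')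
    then obtain cm where g: "cm > 0" "\<And>x. x \<in> range (\<lambda>i. \<bar>c i\<bar>) \<Longrightarrow> cm \<le> x" by blast
    show ?thesis
    proof (rule that[OF g(1)])
      fix i show "cm \<le> \<bar>c i\<bar>" by (intro g(2)) blast
    qed
  qed
  obtain eF where eF0: "eF > 0" and eFb: "\<And>i f. f \<in> F \<Longrightarrow> f \<noteq> lam i \<Longrightarrow> eF \<le> \<bar>f - lam i\<bar>"
  proof -
    let ?A = "{x. \<exists>i f. f \<in> F \<and> f \<noteq> lam i \<and> x = \<bar>f - lam i\<bar>}"
    have "?A \<subseteq> (\<lambda>p. \<bar>snd p - lam (fst p)\<bar>) ` (UNIV \<times> F)"
    proof
      fix x assume "x \<in> ?A"
      then obtain i f where "f \<in> F" "x = \<bar>f - lam i\<bar>" by auto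
      thus "x \<in> (\<lambda>p. \<bar>snd p - lam (fst p)\<bar>) ` (UNIV \<times> F)" by (intro image_eqI[where x="(i,f)"]) auto
    qed
    hence "finite ?A" by (rule finite_subset) (use assms(4) in auto)
    moreover have "\<And>x. x \<in> ?A \<Longrightarrow> 0 < x" by auto
    ultimately have "\<exists>c>0. \<forall>x\<in>?A. c \<le> x" by (rule finite_pos_lb')
    then obtain e where g: "e > 0" "\<And>x. x \<in> ?A \<Longrightarrow> e \<le> x" by blast
    show ?thesis
    proof (rule that[OF g(1)])
      fix i f assume "f \<in> F" "f \<noteq> lam i"
      thus "e \<le> \<bar>f - lam i\<bar>" by (intro g(2)) blast
    qed
  qed
  define \<eta> where "\<eta> = min (g/4) (min (eF/2) (cm * g^2 / (8 * n * K^2)))"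
  have eta0: "\<eta> > 0" unfolding \<eta>_def using g0 eF0 cm0 n0 K0 by auto
  have eta_g: "\<eta> \<le> g/4" and eta_F: "\<eta> \<le> eF/2" and eta_c: "\<eta> \<le> cm * g^2 / (8 * n * K^2)"
    unfolding \<eta>_def by auto
  define lamv :: "real^'n" where "lamv = (\<chi> k. lam k)"
  define Bm where "Bm d t = (\<chi> i j. if i = j then d$i else t * W i j)" for d :: "real^'n" and t :: real
  define \<Phi> where "\<Phi> x = (\<chi> k. det (lam k *\<^sub>R mat 1 - Bm (fst x) (snd x)))" for x :: "(real^'n) \<times> real"
  define P where "P = (g/2)^(CARD('n) - 1)"
  have P0: "P > 0" unfolding P_def using g0 by simp
  define \<tau> where "\<tau> = \<eta> * P / n"
  have tau0: "\<tau> > 0" unfolding \<tau>_def using eta0 P0 n0 by simp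
  have entry: "(lam k *\<^sub>R mat 1 - Bm d t)$i$j = (if i = j then lam k - d$i else - (t * W i j))" for k d t i j
    by (simp add: Bm_def mat_def)
  have contPhi: "continuous_on UNIV \<Phi>"
    unfolding \<Phi>_def
  proof (intro continuous_on_vec_lambda cont_det)
    fix k i j
    show "continuous_on UNIV (\<lambda>x::(real^'n) \<times> real. (lam k *\<^sub>R mat 1 - Bm (fst x) (snd x)) $ i $ j)"
      unfolding entry by (cases "i = j") (auto intro!: continuous_intros)
  qed
  define C where "C = cball lamv \<eta> \<times> cball (0::real) 1"
  have "uniformly_continuous_on C \<Phi>"
    by (rule compact_uniformly_continuous) (auto simp: C_def intro!: compact_Times continuous_on_subset[OF contPhi])
  then obtain \<delta> where d0: "\<delta> > 0" and dU: "\<And>x x'. x \<in> C \<Longrightarrow> x' \<in> C \<Longrightarrow> dist x' x < \<delta> \<Longrightarrow> dist (\<Phi> x') (\<Phi> x) < \<tau>"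
    unfolding uniformly_continuous_on_def using tau0 by metis
  define \<epsilon> where "\<epsilon> = min (1/2) (min (\<delta>/2) (min (g / (16 * n * K)) (cm * g^2 / (32 * n^2 * K^3))))"
  have ep0: "\<epsilon> > 0" unfolding \<epsilon>_def using d0 g0 n0 K0 cm0 by auto
  have ep1: "\<epsilon> \<le> 1" and epd: "\<epsilon> < \<delta>" unfolding \<epsilon>_def using d0 by auto
  have epK: "n * \<epsilon> * K \<le> g / 16"
  proof -
    have "\<epsilon> \<le> g / (16 * n * K)" unfolding \<epsilon>_def by auto
    hence "\<epsilon> * (16 * n * K) \<le> g" using n0 K0 by (simp add: pos_le_divide_eq)
    thus ?thesis by (simp add: algebra_simps)
  qed
  have epc: "\<epsilon> < cm * g^2 / (16 * n^2 * K^3)"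
  proof -
    have "\<epsilon> \<le> cm * g^2 / (32 * n^2 * K^3)" unfolding \<epsilon>_def by auto
    also have "\<dots> < cm * g^2 / (16 * n^2 * K^3)"
      using cm0 g0 n0 K0 by (intro divide_strict_left_mono) auto
    finally show ?thesis .
  qed
  define S where "S = cball lamv \<eta>"
  have dl: "\<bar>d$l - lam l\<bar> \<le> \<eta>" if "d \<in> S" for d l
  proof -
    have "\<bar>(lamv - d)$l\<bar> \<le> norm (lamv - d)" by (rule component_le_norm_cart)
    also have "\<dots> \<le> \<eta>" using that by (simp add: S_def dist_norm)
    finally show ?thesis by (simp add: lamv_def abs_minus_commute)
  qed
  have far: "g/2 \<le> \<bar>lam k - d$l\<bar>" if "d \<in> S" "k \<noteq> l" for d k l
    using gap[OF that(2)] dl[OF that(1), of l] eta_g by linarith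
  have Pk: "P \<le> \<bar>\<Prod>l\<in>UNIV-{k}. lam k - d$l\<bar>" if "d \<in> S" for d k
  proof -
    have "P = (\<Prod>l\<in>UNIV-{k}. g/2)"
      by (simp add: P_def card_Diff_singleton)
    also have "\<dots> \<le> (\<Prod>l\<in>UNIV-{k}. \<bar>lam k - d$l\<bar>)"
      by (intro prod_mono) (use g0 far[OF that] in auto)
    finally show ?thesis by (simp add: abs_prod)
  qed
  have Pnz: "(\<Prod>l\<in>UNIV-{k}. lam k - d$l) \<noteq> 0" if "d \<in> S" for d k
  proof
    assume "(\<Prod>l\<in>UNIV-{k}. lam k - d$l) = 0"
    hence "\<bar>\<Prod>l\<in>UNIV-{k}. lam k - d$l\<bar> = 0" by (simp only: abs_zero)
    thus False using Pk[OF that, of k] P0 by linarith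
  qed
  have Phi0: "\<Phi> (d, 0) $ k = (\<Prod>l\<in>UNIV. lam k - d$l)" for d k
  proof -
    have "det (lam k *\<^sub>R mat 1 - Bm d 0) = (\<Prod>i\<in>UNIV. (lam k *\<^sub>R mat 1 - Bm d 0)$i$i)"
      by (rule det_diagonal) (simp only: entry, simp)
    thus ?thesis unfolding \<Phi>_def by (simp add: Bm_def mat_def)
  qed
  have Rb: "\<bar>\<Phi> (d, \<epsilon>) $ k - \<Phi> (d, 0) $ k\<bar> < \<tau>" if "d \<in> S" for d k
  proof -
    have "(d, 0) \<in> C" "(d, \<epsilon>) \<in> C" using that ep0 ep1 by (auto simp: C_def S_def)
    moreover have "dist (d, \<epsilon>) (d, 0) < \<delta>" using ep0 epd by (simp add: dist_Pair_Pair)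
    ultimately have "dist (\<Phi> (d, \<epsilon>)) (\<Phi> (d, 0)) < \<tau>" by (rule dU)
    moreover have "\<bar>(\<Phi> (d, \<epsilon>) - \<Phi> (d, 0)) $ k\<bar> \<le> dist (\<Phi> (d, \<epsilon>)) (\<Phi> (d, 0))"
      unfolding dist_norm by (rule component_le_norm_cart)
    ultimately show ?thesis by simp
  qed
  define T where "T d = (\<chi> k. lam k + (\<Phi> (d, \<epsilon>) $ k - \<Phi> (d, 0) $ k) / (\<Prod>l\<in>UNIV-{k}. lam k - d$l))" for d
  have cPhi: "continuous_on S (\<lambda>d. \<Phi> (d, t))" for t
    by (rule continuous_on_compose2[OF contPhi]) (auto intro!: continuous_intros)
  have contT: "continuous_on S T"
    unfolding T_def
    by (intro continuous_intros continuous_on_component cPhi) (use Pnz in auto)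
  have TS: "T \<in> S \<rightarrow> S"
  proof
    fix d assume dS: "d \<in> S"
    have "dist lamv (T d) = norm (lamv - T d)" by (simp add: dist_norm)
    also have "\<dots> \<le> (\<Sum>k\<in>UNIV. \<bar>(lamv - T d)$k\<bar>)" by (rule norm_le_l1_cart)
    also have "\<dots> \<le> (\<Sum>k\<in>(UNIV::'n set). \<tau> / P)"
    proof (intro sum_mono)
      fix k
      have "\<bar>(lamv - T d)$k\<bar> = \<bar>\<Phi> (d, \<epsilon>) $ k - \<Phi> (d, 0) $ k\<bar> / \<bar>\<Prod>l\<in>UNIV-{k}. lam k - d$l\<bar>"
        by (simp add: T_def lamv_def abs_divide)
      also have "\<dots> \<le> \<tau> / P"
        using Rb[OF dS, of k] Pk[OF dS, of k] P0 tau0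
        by (intro frac_le) auto
      finally show "\<bar>(lamv - T d)$k\<bar> \<le> \<tau> / P" .
    qed
    also have "\<dots> = \<eta>" using n0 P0 by (simp add: \<tau>_def n_def)
    finally show "T d \<in> S" by (simp add: S_def)
  qed
  obtain d where dS: "d \<in> S" and dfix: "T d = d"
    using brouwer[of S T] contT TS eta0 by (auto simp: S_def)
  have roots: "det (lam k *\<^sub>R mat 1 - Bm d \<epsilon>) = 0" for k
  proof -
    define Q where "Q = (\<Prod>l\<in>UNIV-{k}. lam k - d$l)"
    have Qnz: "Q \<noteq> 0" using Pnz[OF dS] by (simp add: Q_def)
    have "d$k = lam k + (\<Phi> (d, \<epsilon>) $ k - \<Phi> (d, 0) $ k) / Q"
      using arg_cong[OF dfix, of "\<lambda>v. v$k"] by (simp add: T_def Q_def)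
    hence "(d$k - lam k) * Q = \<Phi> (d, \<epsilon>) $ k - \<Phi> (d, 0) $ k" using Qnz by simp
    moreover have "\<Phi> (d, 0) $ k = (lam k - d$k) * Q"
      unfolding Phi0 Q_def by (simp add: prod.remove)
    ultimately have "\<Phi> (d, \<epsilon>) $ k = 0" by (simp add: algebra_simps)
    thus ?thesis by (simp add: \<Phi>_def)
  qed
  have dl': "\<bar>d$l - lam l\<bar> \<le> \<eta>" for l using dl[OF dS] .
  have gapd: "g/2 \<le> \<bar>d$j - lam i\<bar>" if "j \<noteq> i" for i j
    using far[OF dS, of i j] that by (simp add: abs_minus_commute)
  have Bent: "Bm d \<epsilon> $ i $ j = (if i = j then d$i else \<epsilon> * W i j)" for i j
    by (simp add: Bm_def)
  have smallK: "n * \<epsilon> * K \<le> (g/2) / 2" using epK g0 by linarith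
  have diag_ne: "d$i \<noteq> lam i" for i
  proof
    assume eq: "d$i = lam i"
    obtain v where v0: "v \<noteq> 0" and vker: "(lam i *\<^sub>R mat 1 - Bm d \<epsilon>) *v v = 0"
    proof -
      have "rank (lam i *\<^sub>R mat 1 - Bm d \<epsilon>) < CARD('n)"
        using roots[of i] by (simp add: det_eq_0_rank)
      hence "\<exists>x. x \<noteq> 0 \<and> (lam i *\<^sub>R mat 1 - Bm d \<epsilon>) *v x = 0"
        by (simp add: matrix_nonfull_linear_equations_eq)
      thus ?thesis using that by blast
    qed
    have ev: "d$j * v$j + \<epsilon> * (\<Sum>l\<in>UNIV. W j l * v$l) = lam i * v$j" for j
    proof -
      have "0 = ((lam i *\<^sub>R mat 1 - Bm d \<epsilon>) *v v)$j" using vker by simp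
      also have "\<dots> = (\<Sum>l\<in>UNIV. (if j = l then lam i - d$j else - (\<epsilon> * W j l)) * v$l)"
        by (simp only: matrix_vector_mult_def vec_lambda_beta entry)
      also have "\<dots> = (\<Sum>l\<in>UNIV. (if j = l then (lam i - d$j) * v$l else 0) - \<epsilon> * (W j l * v$l))"
        by (intro sum.cong refl) (auto simp: Wd)
      also have "\<dots> = (lam i - d$j) * v$j - \<epsilon> * (\<Sum>l\<in>UNIV. W j l * v$l)"
        by (simp add: sum_subtractf sum_distrib_left)
      finally show ?thesis by (simp add: algebra_simps)
    qed
    have vi: "v$i \<noteq> 0"
    proof
      assume vi0: "v$i = 0"
      have "v$j = 0" for j
        using eig_nonzero[where d="\<lambda>j. d$j" and v="\<lambda>j. v$j" and lam="lam i" and h="g/2" and K=K and e=\<epsilon> and W=W and i=i, OF ev gapd _ Wb]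
          g0 ep0 smallK vi0 by (simp add: n_def)
      hence "v = 0" by (simp add: vec_eq_iff)
      thus False using v0 by simp
    qed
    define u where "u j = v$j / v$i" for j
    have evu: "d$j * u j + \<epsilon> * (\<Sum>l\<in>UNIV. W j l * u l) = lam i * u j" for j
    proof -
      have "d$j * u j + \<epsilon> * (\<Sum>l\<in>UNIV. W j l * u l) = (d$j * v$j + \<epsilon> * (\<Sum>l\<in>UNIV. W j l * v$l)) / v$i"
      proof -
        have "(\<Sum>l\<in>UNIV. W j l * u l) = (\<Sum>l\<in>UNIV. W j l * v$l) / v$i"
          by (simp add: u_def sum_divide_distrib)
        thus ?thesis by (simp add: u_def add_divide_distrib)
      qed
      also have "\<dots> = lam i * u j" by (simp add: ev u_def)
      finally show ?thesis .
    qed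
    have ui: "u i = 1" using vi by (simp add: u_def)
    define D where "D = (\<Sum>j\<in>UNIV. W i j * W j i / (d$j - lam i))"
    have est: "\<bar>d$i - lam i - \<epsilon>^2 * D\<bar> \<le> 2 * n^2 * \<epsilon>^3 * K^3 / (g/2)^2"
      using eig_est[where d="\<lambda>j. d$j" and u=u and lam="lam i" and h="g/2" and K=K and e=\<epsilon> and W=W and i=i, OF evu gapd _ Wb Wd]
        g0 ep0 smallK ui by (simp add: n_def D_def)
    have eta2: "\<eta> \<le> g/2" using eta_g g0 by linarith
    have capp: "\<bar>D - c i\<bar> \<le> n * (K^2 * \<eta> / ((g/2) * g))"
      using c_approx[where d="\<lambda>j. d$j" and lam=lam and \<eta>=\<eta> and g=g and K=K and W=W and i=i, OF dl' eta2 g0 gap Wb Wd]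
        eta_g g0 by (simp add: D_def c_def n_def)
    have "n * (K^2 * \<eta> / ((g/2) * g)) = (2 * n * K^2 / g^2) * \<eta>"
      by (simp add: power2_eq_square)
    also have "\<dots> \<le> (2 * n * K^2 / g^2) * (cm * g^2 / (8 * n * K^2))"
      using eta_c n0 K0 g0 by (intro mult_left_mono) auto
    also have "\<dots> = cm / 4" using n0 K0 g0 by (simp add: power2_eq_square)
    finally have "\<bar>D - c i\<bar> \<le> cm / 4" using capp by linarith
    hence Dlow: "3 * cm / 4 \<le> \<bar>D\<bar>" using cmb[of i] by linarith
    have err: "2 * n^2 * \<epsilon>^3 * K^3 / (g/2)^2 < \<epsilon>^2 * (cm / 2)"
    proof -
      have "\<epsilon> * (16 * n^2 * K^3) < cm * g^2"
        using epc n0 K0 by (simp add: pos_less_divide_eq)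
      hence "8 * n^2 * K^3 * \<epsilon> / g^2 < cm / 2"
        using g0 by (simp add: pos_divide_less_eq algebra_simps)
      hence "\<epsilon>^2 * (8 * n^2 * K^3 * \<epsilon> / g^2) < \<epsilon>^2 * (cm / 2)"
        using ep0 by (intro mult_strict_left_mono) auto
      moreover have "2 * n^2 * \<epsilon>^3 * K^3 / (g/2)^2 = \<epsilon>^2 * (8 * n^2 * K^3 * \<epsilon> / g^2)"
        by (simp add: power2_eq_square power3_eq_cube)
      ultimately show ?thesis by simp
    qed
    have "\<epsilon>^2 * (3 * cm / 4) \<le> \<epsilon>^2 * \<bar>D\<bar>" using Dlow by (intro mult_left_mono) auto
    moreover have "\<bar>\<epsilon>^2 * D\<bar> = \<epsilon>^2 * \<bar>D\<bar>" by (simp add: abs_mult)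
    moreover have "\<epsilon>^2 * (cm / 2) < \<epsilon>^2 * (3 * cm / 4)" using ep0 cm0 by (intro mult_strict_left_mono) auto
    ultimately show False using est err eq by linarith
  qed
  show ?thesis
  proof (rule bexI[where x="Bm d \<epsilon>"], intro conjI allI)
    show "Bm d \<epsilon> \<in> S_graph E"
      unfolding S_graph_def symmetric_mat_def
    proof (intro CollectI conjI allI impI)
      show "transpose (Bm d \<epsilon>) = Bm d \<epsilon>"
        by (simp add: vec_eq_iff transpose_def Bent Wsym)
      fix i j :: 'n assume "i \<noteq> j"
      thus "(Bm d \<epsilon> $ i $ j \<noteq> 0) = E i j" using ep0 Wnz[of i j] by (simp add: Bent)
    qed
    show "SSP (Bm d \<epsilon>)"
      unfolding Bm_def
    proof (rule ssp_near_diag[where d="\<lambda>i. d$i" and h="g/2" and K=K])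
      fix i j :: 'n assume "i \<noteq> j"
      thus "g/2 \<le> \<bar>d$i - d$j\<bar>" using gap[of i j] dl'[of i] dl'[of j] eta_g by linarith
    next
      show "2 * real CARD('n) * \<epsilon> * K < g/2" using epK g0 by (simp add: n_def)
    qed (use Wb Wd ep0 in auto)
    show "spec_is (Bm d \<epsilon>) (mset_set \<sigma>)"
      unfolding spec_is_def
    proof
      fix x
      have "det (x *\<^sub>R mat 1 - Bm d \<epsilon>) = (\<Prod>k\<in>UNIV. x - lam k)"
        by (rule charpoly_from_roots[OF inj roots])
      also have "\<dots> = (\<Prod>\<mu>\<in>\<sigma>. x - \<mu>)"
        by (rule prod.reindex_bij_betw[OF bij])
      also have "\<dots> = (\<Prod>\<mu>\<in>#mset_set \<sigma>. x - \<mu>)"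
        by (rule prod_unfold_prod_mset)
      finally show "det (x *\<^sub>R mat 1 - Bm d \<epsilon>) = (\<Prod>\<mu>\<in>#mset_set \<sigma>. x - \<mu>)" .
    qed
    fix i
    show "Bm d \<epsilon> $ i $ i \<notin> F"
    proof
      assume "Bm d \<epsilon> $ i $ i \<in> F"
      hence "d$i \<in> F" by (simp add: Bent)
      hence "eF \<le> \<bar>d$i - lam i\<bar>" using eFb diag_ne[of i] by blast
      thus False using dl'[of i] eta_F eF0 by linarith
    qed
  qed
qed

end
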